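(* Let $X$ be a prelength space and $Y$ a metric space. Then $\mathrm{map}:(X\to Y)\to(\mathfrak{C}(X)\to\mathfrak{C}(Y))$ is uniformly continuous with modulus $\lambda\varepsilon.\varepsilon$; that is, for all $\varepsilon$ and uniformly continuous $f,g:X\to Y$, if $B_\varepsilon(f(a),g(a))$ for all $a\in X$, then $B'_\varepsilon(\mathrm{map}(f)(x),\mathrm{map}(g)(x))$ for all $x\in\mathfrak{C}(X)$.
   Context: $\mathbb{Q}^+$ denotes the strictly positive rationals; all $\varepsilon,\delta$ (with indices) range over $\mathbb{Q}^+$. A metric space is a triple $(X,\asymp,B)$ where $\asymp$ is an equivalence relation on $X$ and $B$ assigns to each $\varepsilon\in\mathbb{Q}^+$ a binary relation $B_\varepsilon$ on $X$ respecting $\asymp$, such that: (1) each $B_\varepsilon$ is reflexive; (2) each $B_\varepsilon$ is symmetric; (3) if $B_{\varepsilon_1}(a,b)$ and $B_{\varepsilon_2}(b,c)$ then $B_{\varepsilon_1+\varepsilon_2}(a,c)$; (4) if $B_{\varepsilon+\delta}(a,b)$ for all $\delta$, then $B_\varepsilon(a,b)$; (5) if $B_\varepsilon(a,b)$ for all $\varepsilon$, then $a\asymp b$. A prelength space is a metric space such that for all $a,b,\varepsilon,\delta_1,\delta_2$ with $\varepsilon<\delta_1+\delta_2$ and $B_\varepsilon(a,b)$ there exists $c$ with $B_{\delta_1}(a,c)$ and $B_{\delta_2}(c,b)$. A regular function over $X$ is a function $x:\mathbb{Q}^+\to X$ such that $B_{\varepsilon_1+\varepsilon_2}(x(\varepsilon_1),x(\varepsilon_2))$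 for all $\varepsilon_1,\varepsilon_2$. $\mathfrak{C}(X)$ is the metric space of regular functions over $X$, with $x\asymp y$ iff $B_{2\varepsilon}(x(\varepsilon),y(\varepsilon))$ for all $\varepsilon$ and $B'_\varepsilon(x,y)$ iff $B_{\varepsilon+\delta_1+\delta_2}(x(\delta_1),y(\delta_2))$ for all $\delta_1,\delta_2$. A uniformly continuous function $f:X\to Y$ is a pair of a function and a modulus $\mu_f$ with $B^X_{\mu_f(\varepsilon)}(x_1,x_2)\Rightarrow B^Y_\varepsilon(f(x_1),f(x_2))$. For metric spaces $U,V$, $U\to V$ denotes the metric space of uniformly continuous functions with $B_\varepsilon(f,g)$ iff $B_\varepsilon(f(a),g(a))$ for all $a\in U$. $\mathrm{map}(f)(x)=\lambda\varepsilon.\,f(x(\mu_f(\varepsilon)))$. *)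

theory Defs
  imports Complex_Main
begin

definition metric_space :: "'a set \<Rightarrow> ('a \<Rightarrow> 'a \<Rightarrow> bool) \<Rightarrow> (rat \<Rightarrow> 'a \<Rightarrow> 'a \<Rightarrow> bool) \<Rightarrow> bool" where
  "metric_space X eq B \<longleftrightarrow>
     (\<forall>a\<in>X. eq a a) \<and>
     (\<forall>a\<in>X. \<forall>b\<in>X. eq a b \<longrightarrow> eq b a) \<and>
     (\<forall>a\<in>X. \<forall>b\<in>X. \<forall>c\<in>X. eq a b \<longrightarrow> eq b c \<longrightarrow> eq a c) \<and>
     (\<forall>e>0. \<forall>a\<in>X. \<forall>b\<in>X. \<forall>a'\<in>X. \<forall>b'\<in>X.
        eq a a' \<longrightarrow> eq b b' \<longrightarrow> B e a b \<longrightarrow> B e a' b') \<and>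
     (\<forall>e>0. \<forall>a\<in>X. B e a a) \<and>
     (\<forall>e>0. \<forall>a\<in>X. \<forall>b\<in>X. B e a b \<longrightarrow> B e b a) \<and>
     (\<forall>e1>0. \<forall>e2>0. \<forall>a\<in>X. \<forall>b\<in>X. \<forall>c\<in>X.
        B e1 a b \<longrightarrow> B e2 b c \<longrightarrow> B (e1 + e2) a c) \<and>
     (\<forall>e>0. \<forall>a\<in>X. \<forall>b\<in>X. (\<forall>d>0. B (e + d) a b) \<longrightarrow> B e a b) \<and>
     (\<forall>a\<in>X. \<forall>b\<in>X. (\<forall>e>0. B e a b) \<longrightarrow> eq a b)"

definition prelength_space :: "'a set \<Rightarrow> ('a \<Rightarrow> 'a \<Rightarrow> bool) \<Rightarrow> (rat \<Rightarrow> 'a \<Rightarrow> 'a \<Rightarrow> bool) \<Rightarrow> bool" where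
  "prelength_space X eq B \<longleftrightarrow> metric_space X eq B \<and>
     (\<forall>a\<in>X. \<forall>b\<in>X. \<forall>e>0. \<forall>d1>0. \<forall>d2>0.
        e < d1 + d2 \<longrightarrow> B e a b \<longrightarrow> (\<exists>c\<in>X. B d1 a c \<and> B d2 c b))"

text \<open>Regular functions over X (only values at positive rationals matter).\<close>
definition regular_fun :: "'a set \<Rightarrow> (rat \<Rightarrow> 'a \<Rightarrow> 'a \<Rightarrow> bool) \<Rightarrow> (rat \<Rightarrow> 'a) \<Rightarrow> bool" where
  "regular_fun X B x \<longleftrightarrow> (\<forall>e>0. x e \<in> X) \<and>
     (\<forall>e1>0. \<forall>e2>0. B (e1 + e2) (x e1) (x e2))"

definition ball_C :: "(rat \<Rightarrow> 'a \<Rightarrow> 'a \<Rightarrow> bool) \<Rightarrow> rat \<Rightarrow> (rat \<Rightarrow> 'a) \<Rightarrow> (rat \<Rightarrow> 'a) \<Rightarrow> bool" where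
  "ball_C B e x y \<longleftrightarrow> (\<forall>d1>0. \<forall>d2>0. B (e + d1 + d2) (x d1) (y d2))"

definition unif_cont :: "'a set \<Rightarrow> (rat \<Rightarrow> 'a \<Rightarrow> 'a \<Rightarrow> bool) \<Rightarrow> 'b set \<Rightarrow> (rat \<Rightarrow> 'b \<Rightarrow> 'b \<Rightarrow> bool)
    \<Rightarrow> ('a \<Rightarrow> 'b) \<Rightarrow> (rat \<Rightarrow> rat) \<Rightarrow> bool" where
  "unif_cont X BX Y BY f mu \<longleftrightarrow> (\<forall>a\<in>X. f a \<in> Y) \<and> (\<forall>e>0. mu e > 0) \<and>
     (\<forall>e>0. \<forall>a\<in>X. \<forall>b\<in>X. BX (mu e) a b \<longrightarrow> BY e (f a) (f b))"

definition cmap :: "('a \<Rightarrow> 'b) \<Rightarrow> (rat \<Rightarrow> rat) \<Rightarrow> (rat \<Rightarrow> 'a) \<Rightarrow> (rat \<Rightarrow> 'b)" where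
  "cmap f mu x = (\<lambda>e. f (x (mu e)))"

end

theory Submission
  imports Defs
begin

theorem lemma24:
  fixes X :: "'a set" and eqX :: "'a \<Rightarrow> 'a \<Rightarrow> bool" and BX :: "rat \<Rightarrow> 'a \<Rightarrow> 'a \<Rightarrow> bool"
    and Y :: "'b set" and eqY :: "'b \<Rightarrow> 'b \<Rightarrow> bool" and BY :: "rat \<Rightarrow> 'b \<Rightarrow> 'b \<Rightarrow> bool"
    and f g :: "'a \<Rightarrow> 'b" and muf mug :: "rat \<Rightarrow> rat" and e :: rat and x :: "rat \<Rightarrow> 'a"
  assumes "prelength_space X eqX BX"
    and "metric_space Y eqY BY"
    and "unif_cont X BX Y BY f muf"
    and "unif_cont X BX Y BY g mug"
    and "e > 0"
    and "\<forall>a\<in>X. BY e (f a) (g a)"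
    and "regular_fun X BX x"
  shows "ball_C BY e (cmap f muf x) (cmap g mug x)"
proof -
  have PL: "\<And>a b e d1 d2. a \<in> X \<Longrightarrow> b \<in> X \<Longrightarrow> e > 0 \<Longrightarrow> d1 > 0 \<Longrightarrow> d2 > 0 \<Longrightarrow>
      e < d1 + d2 \<Longrightarrow> BX e a b \<Longrightarrow> \<exists>c\<in>X. BX d1 a c \<and> BX d2 c b"
    using assms(1) unfolding prelength_space_def by blast
  have TY: "\<And>e1 e2 a b c. e1 > 0 \<Longrightarrow> e2 > 0 \<Longrightarrow> a \<in> Y \<Longrightarrow> b \<in> Y \<Longrightarrow> c \<in> Y \<Longrightarrow>
      BY e1 a b \<Longrightarrow> BY e2 b c \<Longrightarrow> BY (e1 + e2) a c"
    using assms(2) unfolding metric_space_def by blast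
  have CY: "\<And>e a b. e > 0 \<Longrightarrow> a \<in> Y \<Longrightarrow> b \<in> Y \<Longrightarrow> (\<forall>d>0. BY (e + d) a b) \<Longrightarrow> BY e a b"
    using assms(2) unfolding metric_space_def by blast
  have fY: "\<And>a. a \<in> X \<Longrightarrow> f a \<in> Y" and fm: "\<And>e. e > 0 \<Longrightarrow> muf e > 0"
    and fc: "\<And>e a b. e > 0 \<Longrightarrow> a \<in> X \<Longrightarrow> b \<in> X \<Longrightarrow> BX (muf e) a b \<Longrightarrow> BY e (f a) (f b)"
    using assms(3) unfolding unif_cont_def by blast+
  have gY: "\<And>a. a \<in> X \<Longrightarrow> g a \<in> Y" and gm: "\<And>e. e > 0 \<Longrightarrow> mug e > 0"
    and gc: "\<And>e a b. e > 0 \<Longrightarrow> a \<in> X \<Longrightarrow> b \<in> X \<Longrightarrow> BX (mug e) a b \<Longrightarrow> BY e (g a) (g b)"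
    using assms(4) unfolding unif_cont_def by blast+
  have xX: "\<And>e. e > 0 \<Longrightarrow> x e \<in> X" and xr: "\<And>e1 e2. e1 > 0 \<Longrightarrow> e2 > 0 \<Longrightarrow> BX (e1 + e2) (x e1) (x e2)"
    using assms(7) unfolding regular_fun_def by blast+
  show ?thesis unfolding ball_C_def cmap_def
  proof (intro allI impI)
    fix d1 d2 :: rat assume d1: "d1 > 0" and d2: "d2 > 0"
    define al where "al = muf d1"
    define be where "be = mug d2"
    define a where "a = x al"
    define b where "b = x be"
    have al: "al > 0" using fm d1 al_def by simp
    have be: "be > 0" using gm d2 be_def by simp
    have aX: "a \<in> X" using xX al a_def by simp
    have bX: "b \<in> X" using xX be b_def by simp
    have ab: "BX (al + be) a b" using xr al be a_def b_def by simp
    have "\<forall>d>0. BY ((e + d1 + d2) + d) (f a) (g b)"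
    proof (intro allI impI)
      fix d :: rat assume d: "d > 0"
      define m where "m = mug d"
      have m: "m > 0" using gm d m_def by simp
      obtain c where cX: "c \<in> X" and ac: "BX al a c" and cb: "BX (m/2 + be) c b"
        using PL[OF aX bX _ al _ _ ab, of "m/2 + be"] al be m by auto
      obtain c' where c'X: "c' \<in> X" and cc: "BX m c c'" and c'b: "BX be c' b"
        using PL[OF cX bX _ m be _ cb] be m by auto
      have 1: "BY d1 (f a) (f c)" using fc[OF d1 aX cX] ac al_def by simp
      have 2: "BY e (f c) (g c)" using assms(6) cX by blast
      have 3: "BY d (g c) (g c')" using gc[OF d cX c'X] cc m_def by simp
      have 4: "BY d2 (g c') (g b)" using gc[OF d2 c'X bX] c'b be_def by simp
      have "BY (d1 + e) (f a) (g c)" using TY[OF d1 assms(5) _ _ _ 1 2] aX cX fY gY by blast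
      then have "BY (d1 + e + d) (f a) (g c')" using TY[OF _ d _ _ _ _ 3] aX cX c'X fY gY d1 assms(5) by simp
      then have "BY (d1 + e + d + d2) (f a) (g b)" using TY[OF _ d2 _ _ _ _ 4] aX c'X bX fY gY d1 d assms(5) by simp
      then show "BY ((e + d1 + d2) + d) (f a) (g b)" by (simp add: algebra_simps)
    qed
    then have "BY (e + d1 + d2) (f a) (g b)"
      using CY aX bX fY gY d1 d2 assms(5) by simp
    then show "BY (e + d1 + d2) (f (x (muf d1))) (g (x (mug d2)))"
      using a_def b_def al_def be_def by simp
  qed
qed

end
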